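(* Let $A\in\mathcal{C}_n$ and let $w\in\mathbb{R}^n$ be nonzero. Then $A$ is irreducible with respect to $ww^T$ if and only if there exists a zero $u$ of $A$ with $w^Tu\ne0$.
   Context: $\mathcal{C}_n$ denotes the cone of copositive matrices: real symmetric $n\times n$ matrices $A$ with $x^TAx\ge 0$ for all $x\in\mathbb{R}^n_+$. For a matrix $M$, $A$ is irreducible with respect to $M$ if there does not exist $\gamma>0$ with $A-\gamma M\in\mathcal{C}_n$ (for $M\ne0$). A zero of $A$ is a nonzero $u\in\mathbb{R}^n_+$ with $u^TAu=0$. *)

theory Defs
  imports "HOL-Analysis.Analysis"
begin

definition nonneg_vec :: "real^'n \<Rightarrow> bool" where
  "nonneg_vec x \<longleftrightarrow> (\<forall>i. 0 \<le> x $ i)"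

definition copositive :: "real^'n^'n \<Rightarrow> bool" where
  "copositive A \<longleftrightarrow> transpose A = A \<and> (\<forall>x. nonneg_vec x \<longrightarrow> x \<bullet> (A *v x) \<ge> 0)"

definition irreducible_wrt :: "real^'n^'n \<Rightarrow> real^'n^'n \<Rightarrow> bool" where
  "irreducible_wrt A M \<longleftrightarrow> \<not> (\<exists>\<gamma>>0. copositive (A - \<gamma> *\<^sub>R M))"

definition is_zero_of :: "real^'n^'n \<Rightarrow> real^'n \<Rightarrow> bool" where
  "is_zero_of A u \<longleftrightarrow> u \<noteq> 0 \<and> nonneg_vec u \<and> u \<bullet> (A *v u) = 0"

definition outer :: "real^'n \<Rightarrow> real^'n \<Rightarrow> real^'n^'n" where
  "outer v w = (\<chi> i j. v $ i * w $ j)"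

end

theory Submission
  imports Defs
begin

lemma sym_form:
  fixes A :: "real^'n^'n"
  assumes "transpose A = A"
  shows "x \<bullet> (A *v y) = y \<bullet> (A *v x)"
proof -
  have "x \<bullet> (A *v y) = (x v* A) \<bullet> y" by (simp add: dot_lmul_matrix)
  also have "x v* A = transpose A *v x" by (simp add: transpose_matrix_vector)
  also have "(transpose A *v x) \<bullet> y = y \<bullet> (A *v x)" using assms by (simp add: inner_commute)
  finally show ?thesis .
qed

lemma quad_expand:
  fixes A :: "real^'n^'n"
  assumes "transpose A = A"
  shows "(x + t *\<^sub>R y) \<bullet> (A *v (x + t *\<^sub>R y))
         = x \<bullet> (A *v x) + 2 * t * (y \<bullet> (A *v x)) + t^2 * (y \<bullet> (A *v y))"
  using sym_form[OF assms, of x y]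
  by (simp add: matrix_vector_right_distrib matrix_vector_mult_scaleR inner_add_left
      inner_add_right algebra_simps power2_eq_square)

lemma zero_Ay_nonneg:
  fixes A :: "real^'n^'n"
  assumes "copositive A" and "nonneg_vec y" and "y \<bullet> (A *v y) = 0"
  shows "0 \<le> (A *v y) $ i"
proof (rule ccontr)
  assume neg: "\<not> 0 \<le> (A *v y) $ i"
  let ?e = "axis i (1::real)"
  have sym: "transpose A = A" using assms(1) by (simp add: copositive_def)
  define t where "t = - ((A *v y) $ i) / (\<bar>?e \<bullet> (A *v ?e)\<bar> + 1)"
  have tpos: "t > 0" using neg by (simp add: t_def divide_neg_pos add_nonneg_pos)
  have nn: "nonneg_vec (y + t *\<^sub>R ?e)"
    using assms(2) tpos by (auto simp: nonneg_vec_def axis_def)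
  have "0 \<le> (y + t *\<^sub>R ?e) \<bullet> (A *v (y + t *\<^sub>R ?e))"
    using assms(1) nn by (simp add: copositive_def)
  also have "\<dots> = 2 * t * ((A *v y) $ i) + t^2 * (?e \<bullet> (A *v ?e))"
    using quad_expand[OF sym, of y t ?e] assms(3) by (simp add: inner_axis inner_axis')
  finally have h: "0 \<le> t * (2 * ((A *v y) $ i) + t * (?e \<bullet> (A *v ?e)))"
    by (simp add: algebra_simps power2_eq_square)
  have "t * (?e \<bullet> (A *v ?e)) \<le> t * \<bar>?e \<bullet> (A *v ?e)\<bar>"
    using tpos by (intro mult_left_mono) auto
  also have "\<dots> < t * (\<bar>?e \<bullet> (A *v ?e)\<bar> + 1)" using tpos by simp
  also have "\<dots> = - ((A *v y) $ i)" unfolding t_def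
    by (simp add: field_simps add_nonneg_pos)
  finally have "2 * ((A *v y) $ i) + t * (?e \<bullet> (A *v ?e)) < 0" using neg by linarith
  with tpos h show False by (simp add: mult_less_0_iff zero_le_mult_iff)
qed


lemma q_cont: "continuous_on K (\<lambda>y::real^'n. y \<bullet> ((A::real^'n^'n) *v y))"
  by (intro continuous_intros linear_continuous_on matrix_vector_mul_linear)

lemma main_ind:
  fixes A :: "real^'n^'n" and w :: "real^'n"
  assumes cop: "copositive A" and w: "w \<noteq> 0"
    and nz: "\<forall>u. is_zero_of A u \<longrightarrow> w \<bullet> u = 0"
  shows "card (- F) = k \<Longrightarrow> \<exists>c>0. \<forall>x. nonneg_vec x \<and> (\<forall>i\<in>F. x $ i = 0)
           \<longrightarrow> c * (w \<bullet> x)^2 \<le> x \<bullet> (A *v x)"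
proof (induction k arbitrary: F rule: less_induct)
  case (less k F)
  have sym: "transpose A = A" using cop by (simp add: copositive_def)
  show ?case
  proof (cases "\<exists>y. nonneg_vec y \<and> y \<noteq> 0 \<and> (\<forall>i\<in>F. y $ i = 0) \<and> y \<bullet> (A *v y) = 0")
    case True
    then obtain y where y: "nonneg_vec y" "y \<noteq> 0" "\<forall>i\<in>F. y $ i = 0" "y \<bullet> (A *v y) = 0"
      by blast
    have wy: "w \<bullet> y = 0" using nz y by (simp add: is_zero_of_def)
    have IH: "\<forall>i\<in>-F. \<exists>c>0. \<forall>x. nonneg_vec x \<and> (\<forall>j\<in>insert i F. x $ j = 0)
           \<longrightarrow> c * (w \<bullet> x)^2 \<le> x \<bullet> (A *v x)"
    proof
      fix i assume i: "i \<in> -F"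
      have "- insert i F = (-F) - {i}" by auto
      hence "card (- insert i F) = k - 1" using i less.prems by simp
      moreover have "k > 0" using i less.prems by (metis card_0_eq emptyE finite gr0I)
      ultimately show "\<exists>c>0. \<forall>x. nonneg_vec x \<and> (\<forall>j\<in>insert i F. x $ j = 0)
           \<longrightarrow> c * (w \<bullet> x)^2 \<le> x \<bullet> (A *v x)"
        using less.IH[of "k - 1" "insert i F"] by simp
    qed
    then obtain cf where cf: "\<forall>i\<in>-F. cf i > 0 \<and> (\<forall>x. nonneg_vec x \<and> (\<forall>j\<in>insert i F. x $ j = 0)
           \<longrightarrow> cf i * (w \<bullet> x)^2 \<le> x \<bullet> (A *v x))"
      by metis
    obtain i0 where i0: "y $ i0 \<noteq> 0" using y(2) by (metis vec_eq_iff zero_index)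
    have i0F: "i0 \<in> -F" using i0 y(3) by auto
    define c0 where "c0 = Min (cf ` (-F))"
    have c0pos: "c0 > 0" unfolding c0_def using cf i0F by (subst Min_gr_iff) auto
    have c0le: "\<And>i. i \<in> -F \<Longrightarrow> c0 \<le> cf i" unfolding c0_def by simp
    show ?thesis
    proof (intro exI[of _ c0] conjI allI impI c0pos)
      fix x :: "real^'n" assume x: "nonneg_vec x \<and> (\<forall>i\<in>F. x $ i = 0)"
      define S where "S = {j. 0 < y $ j}"
      have Sne: "S \<noteq> {}" using i0 y(1) unfolding S_def nonneg_vec_def
        by (metis less_eq_real_def mem_Collect_eq empty_iff)
      define s where "s = Min ((\<lambda>j. x $ j / y $ j) ` S)"
      have "s \<in> (\<lambda>j. x $ j / y $ j) ` S" unfolding s_def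
        by (rule Min_in) (use Sne in auto)
      then obtain i where iS: "i \<in> S" and si: "s = x $ i / y $ i" by auto
      have sle: "\<And>j. j \<in> S \<Longrightarrow> s \<le> x $ j / y $ j" unfolding s_def by simp
      have s0: "s \<ge> 0" using si iS x unfolding S_def nonneg_vec_def by simp
      define x' where "x' = x + (-s) *\<^sub>R y"
      have x'nn: "nonneg_vec x'"
        unfolding nonneg_vec_def
      proof
        fix j
        show "0 \<le> x' $ j"
        proof (cases "j \<in> S")
          case True
          hence yj: "y $ j > 0" by (simp add: S_def)
          have "s * y $ j \<le> x $ j / y $ j * y $ j" using sle[OF True] yj by (simp add: pos_le_divide_eq)
          thus ?thesis using yj by (simp add: x'_def)
        next
          case False
          hence "y $ j = 0" using y(1) by (auto simp: S_def nonneg_vec_def less_eq_real_def)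
          thus ?thesis using x by (simp add: x'_def nonneg_vec_def)
        qed
      qed
      have iF: "i \<in> -F" using iS y(3) by (auto simp: S_def)
      have x'z: "\<forall>j\<in>insert i F. x' $ j = 0"
        using x y(3) iS si by (auto simp: x'_def S_def)
      have wx': "w \<bullet> x' = w \<bullet> x" using wy by (simp add: x'_def inner_diff_right)
      have yAx: "y \<bullet> (A *v x) \<ge> 0"
      proof -
        have "y \<bullet> (A *v x) = x \<bullet> (A *v y)" using sym_form[OF sym] by simp
        also have "\<dots> = (\<Sum>j\<in>UNIV. x $ j * (A *v y) $ j)" by (simp add: inner_vec_def)
        also have "\<dots> \<ge> 0" using x zero_Ay_nonneg[OF cop y(1) y(4)]
          by (intro sum_nonneg) (auto simp: nonneg_vec_def)
        finally show ?thesis .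
      qed
      have "x' \<bullet> (A *v x') = x \<bullet> (A *v x) + 2 * (-s) * (y \<bullet> (A *v x))"
        unfolding x'_def using quad_expand[OF sym, of x "-s" y] y(4) by simp
      also have "\<dots> \<le> x \<bullet> (A *v x)" using s0 yAx by (simp add: mult_nonneg_nonneg)
      finally have qle: "x' \<bullet> (A *v x') \<le> x \<bullet> (A *v x)" .
      have "c0 * (w \<bullet> x)^2 \<le> cf i * (w \<bullet> x)^2"
        using c0le[OF iF] by (intro mult_right_mono) auto
      also have "\<dots> \<le> x' \<bullet> (A *v x')" using cf iF x'nn x'z wx' by metis
      finally show "c0 * (w \<bullet> x)^2 \<le> x \<bullet> (A *v x)" using qle by linarith
    qed
  next
    case False
    define K where "K = {y::real^'n. nonneg_vec y \<and> (\<forall>i\<in>F. y $ i = 0) \<and> norm y = 1}"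
    have scale: "(1 / norm x) *\<^sub>R x \<in> K" if "nonneg_vec x" "\<forall>i\<in>F. x $ i = 0" "x \<noteq> 0" for x
      using that by (auto simp: K_def nonneg_vec_def)
    show ?thesis
    proof (cases "K = {}")
      case True
      show ?thesis
      proof (intro exI[of _ 1] conjI allI impI)
        fix x :: "real^'n" assume x: "nonneg_vec x \<and> (\<forall>i\<in>F. x $ i = 0)"
        hence "x = 0" using scale True by blast
        thus "1 * (w \<bullet> x)^2 \<le> x \<bullet> (A *v x)" by simp
      qed simp
    next
      case Kne: False
      have "compact K"
      proof -
        have cF: "closed {y::real^'n. \<forall>i\<in>F. y $ i = 0}"
        proof -
          have "{y::real^'n. \<forall>i\<in>F. y $ i = 0} = (\<Inter>i\<in>F. {y. y $ i = 0})" by auto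
          moreover have "closed (\<Inter>i\<in>F. {y::real^'n. y $ i = 0})"
            by (intro closed_INT ballI closed_Collect_eq continuous_intros)
          ultimately show ?thesis by simp
        qed
        have "closed K" using cF unfolding K_def nonneg_vec_def
          by (intro closed_Collect_conj closed_Collect_all closed_Collect_le closed_Collect_eq
              continuous_intros ballI closed_Collect_imp) auto
        moreover have "bounded K" unfolding K_def by (rule bounded_subset[of "cball 0 1"]) auto
        ultimately show ?thesis using compact_eq_bounded_closed by blast
      qed
      then obtain y0 where y0: "y0 \<in> K" "\<forall>y\<in>K. y0 \<bullet> (A *v y0) \<le> y \<bullet> (A *v y)"
        using continuous_attains_inf[OF _ Kne q_cont] by blast
      define m where "m = y0 \<bullet> (A *v y0)"
      have "m \<ge> 0" using y0(1) cop by (simp add: K_def copositive_def m_def)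
      moreover have "m \<noteq> 0" using False y0(1) unfolding K_def m_def by auto
      ultimately have mpos: "m > 0" by simp
      define c where "c = m / (norm w)^2"
      have cpos: "c > 0" using mpos w by (simp add: c_def)
      show ?thesis
      proof (intro exI[of _ c] conjI allI impI cpos)
        fix x :: "real^'n" assume x: "nonneg_vec x \<and> (\<forall>i\<in>F. x $ i = 0)"
        show "c * (w \<bullet> x)^2 \<le> x \<bullet> (A *v x)"
        proof (cases "x = 0")
          case True thus ?thesis by simp
        next
          case xne: False
          let ?z = "(1 / norm x) *\<^sub>R x"
          have "m \<le> ?z \<bullet> (A *v ?z)" using y0(2) scale x xne unfolding m_def by blast
          also have "\<dots> = (x \<bullet> (A *v x)) / (norm x)^2"
            by (simp add: matrix_vector_mult_scaleR power2_eq_square)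
          finally have h1: "m * (norm x)^2 \<le> x \<bullet> (A *v x)" using xne
            by (simp add: field_simps)
          have "(w \<bullet> x)^2 \<le> (norm w * norm x)^2"
            using Cauchy_Schwarz_ineq2[of w x] by (metis abs_ge_zero power_mono power2_abs)
          hence "c * (w \<bullet> x)^2 \<le> c * (norm w * norm x)^2"
            using cpos by (intro mult_left_mono) auto
          also have "\<dots> = m * (norm x)^2" using w
            by (simp add: c_def power_mult_distrib)
          finally show ?thesis using h1 by linarith
        qed
      qed
    qed
  qed
qed

lemma outer_mult: "outer w w *v x = (w \<bullet> x) *\<^sub>R (w::real^'n)"
  by (simp add: vec_eq_iff outer_def matrix_vector_mult_def inner_vec_def sum_distrib_left
      algebra_simps)

lemma transpose_outer: "transpose (outer w w) = outer (w::real^'n) w"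
  by (simp add: vec_eq_iff outer_def transpose_def)

theorem lemma4p3:
  fixes A :: "real^'n^'n" and w :: "real^'n"
  assumes "copositive A" and "w \<noteq> 0"
  shows "irreducible_wrt A (outer w w) \<longleftrightarrow> (\<exists>u. is_zero_of A u \<and> w \<bullet> u \<noteq> 0)"
proof
  assume irr: "irreducible_wrt A (outer w w)"
  show "\<exists>u. is_zero_of A u \<and> w \<bullet> u \<noteq> 0"
  proof (rule ccontr)
    assume "\<not> ?thesis"
    hence nz: "\<forall>u. is_zero_of A u \<longrightarrow> w \<bullet> u = 0" by blast
    obtain c where c: "c > 0" "\<forall>x. nonneg_vec x \<and> (\<forall>i\<in>{}. x $ i = 0)
           \<longrightarrow> c * (w \<bullet> x)^2 \<le> x \<bullet> (A *v x)"
      using main_ind[OF assms nz, of "{}" "card (- {})"] by blast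
    have "copositive (A - c *\<^sub>R outer w w)"
      unfolding copositive_def
    proof (intro conjI allI impI)
      show "transpose (A - c *\<^sub>R outer w w) = A - c *\<^sub>R outer w w"
        using assms(1) transpose_outer[of w]
        by (simp add: copositive_def transpose_def vec_eq_iff)
      fix x :: "real^'n" assume "nonneg_vec x"
      hence "c * (w \<bullet> x)^2 \<le> x \<bullet> (A *v x)" using c(2) by simp
      thus "0 \<le> x \<bullet> ((A - c *\<^sub>R outer w w) *v x)"
        by (simp add: matrix_vector_mult_diff_rdistrib outer_mult inner_diff_right
            scaleR_matrix_vector_assoc[symmetric] inner_commute power2_eq_square)
    qed
    thus False using irr c(1) by (auto simp: irreducible_wrt_def)
  qed
next
  assume "\<exists>u. is_zero_of A u \<and> w \<bullet> u \<noteq> 0"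
  then obtain u where u: "is_zero_of A u" "w \<bullet> u \<noteq> 0" by blast
  show "irreducible_wrt A (outer w w)"
    unfolding irreducible_wrt_def
  proof
    assume "\<exists>\<gamma>>0. copositive (A - \<gamma> *\<^sub>R outer w w)"
    then obtain g where g: "g > 0" "copositive (A - g *\<^sub>R outer w w)" by blast
    have "0 \<le> u \<bullet> ((A - g *\<^sub>R outer w w) *v u)"
      using g(2) u(1) by (simp add: copositive_def is_zero_of_def)
    also have "\<dots> = - g * (w \<bullet> u)^2"
      using u(1) by (simp add: is_zero_of_def matrix_vector_mult_diff_rdistrib outer_mult
          inner_diff_right scaleR_matrix_vector_assoc[symmetric] inner_commute power2_eq_square)
    finally show False using g(1) u(2) by (simp add: mult_le_0_iff)
  qed
qed

end
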